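(* Let $(\mathbb X,S)$ be a minimal subshift over a finite alphabet satisfying the Boshernitzan condition, let $(\mathbb X',S')$ be a $p$-periodic subshift, let $T=S\times S'$ on $\mathbb X\times\mathbb X'$, and let $\mathrm s(p)$ be the number of $S^p$-minimal components of $\mathbb X$. The following are equivalent: (a) $(\mathbb X\times\mathbb X',T)$ is topologically conjugate to a minimal subshift satisfying the Boshernitzan condition; (b) $(\mathbb X\times\mathbb X',T)$ is minimal; (c) $\mathrm s(p)=1$; (d) $(\mathbb X,S)$ has no topological eigenvalue of the form $e^{2\pi ik/p}$, $k\in\mathbb Z$, other than $1$.
   Context: A $p$-periodic subshift is the set of all translates of a single $p$-periodic sequence. Boshernitzan condition for a minimal subshift: there is a shift-invariant probability measure $\nu$ with $\limsup_{n}n\min\{\nu[u]:u\in\mathcal L_n(\mathbb X)\}>0$, $\mathcal L_n(\mathbb X)$ the length-$n$ words occurring in $\mathbb X$, $[u]$ the corresponding cylinder set at position $0$. A topological eigenvalue is $z\in\mathbb C$ with $f\circ S=zf$ for some continuous $f\not\equiv0$. An $S^p$-minimal component is a nonempty closed $S^p$-invariant set minimal with these properties. *)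

theory Defs
  imports "HOL-Analysis.Analysis" "HOL-Probability.Probability_Measure"
begin

definition shift :: "(int \<Rightarrow> 'a) \<Rightarrow> (int \<Rightarrow> 'a)" where
  "shift x = (\<lambda>n. x (n + 1))"

definition shift_top :: "(int \<Rightarrow> 'a) topology" where
  "shift_top = product_topology (\<lambda>_. discrete_topology UNIV) UNIV"

definition subshift_on :: "'a set \<Rightarrow> (int \<Rightarrow> 'a) set \<Rightarrow> bool" where
  "subshift_on A X \<longleftrightarrow> X \<noteq> {} \<and> closedin shift_top X \<and> shift ` X = X \<and>
     (\<forall>x\<in>X. range x \<subseteq> A)"

definition minimal_system :: "'a topology \<Rightarrow> 'a set \<Rightarrow> ('a \<Rightarrow> 'a) \<Rightarrow> bool" where
  "minimal_system Tp X f \<longleftrightarrow> X \<noteq> {} \<and> f ` X \<subseteq> X \<and>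
     (\<forall>Z. closedin (subtopology Tp X) Z \<and> Z \<noteq> {} \<and> f ` Z \<subseteq> Z \<longrightarrow> Z = X)"

definition cylinder :: "(int \<Rightarrow> 'a) set \<Rightarrow> 'a list \<Rightarrow> (int \<Rightarrow> 'a) set" where
  "cylinder X u = {x \<in> X. \<forall>i < length u. x (int i) = u ! i}"

definition language :: "(int \<Rightarrow> 'a) set \<Rightarrow> nat \<Rightarrow> 'a list set" where
  "language X n = {u. length u = n \<and> cylinder X u \<noteq> {}}"

definition shift_invariant_prob :: "(int \<Rightarrow> 'a) set \<Rightarrow> (int \<Rightarrow> 'a) measure \<Rightarrow> bool" where
  "shift_invariant_prob X \<nu> \<longleftrightarrow> prob_space \<nu> \<and> space \<nu> = X \<and>
     sets \<nu> = sigma_sets X {U. openin (subtopology shift_top X) U} \<and>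
     (\<forall>B \<in> sets \<nu>. emeasure \<nu> (shift -` B \<inter> X) = emeasure \<nu> B)"

definition boshernitzan :: "(int \<Rightarrow> 'a) set \<Rightarrow> bool" where
  "boshernitzan X \<longleftrightarrow> (\<exists>\<nu>. shift_invariant_prob X \<nu> \<and>
     limsup (\<lambda>n. ereal (real n * Min ((\<lambda>u. measure \<nu> (cylinder X u)) ` language X n))) > 0)"

definition topological_eigenvalue :: "(int \<Rightarrow> 'a) set \<Rightarrow> complex \<Rightarrow> bool" where
  "topological_eigenvalue X z \<longleftrightarrow> (\<exists>f. continuous_map (subtopology shift_top X) euclidean f \<and>
     (\<exists>x\<in>X. f x \<noteq> 0) \<and> (\<forall>x\<in>X. f (shift x) = z * f x))"

definition Sp_minimal_component :: "nat \<Rightarrow> (int \<Rightarrow> 'a) set \<Rightarrow> (int \<Rightarrow> 'a) set \<Rightarrow> bool" where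
  "Sp_minimal_component p X Z \<longleftrightarrow>
     Z \<subseteq> X \<and> Z \<noteq> {} \<and> closedin shift_top Z \<and> (shift ^^ p) ` Z \<subseteq> Z \<and>
     (\<forall>W. W \<subseteq> Z \<and> W \<noteq> {} \<and> closedin shift_top W \<and> (shift ^^ p) ` W \<subseteq> W \<longrightarrow> W = Z)"

definition num_Sp_components :: "nat \<Rightarrow> (int \<Rightarrow> 'a) set \<Rightarrow> nat" where
  "num_Sp_components p X = card {Z. Sp_minimal_component p X Z}"

definition least_period :: "nat \<Rightarrow> (int \<Rightarrow> 'a) \<Rightarrow> bool" where
  "least_period p w \<longleftrightarrow> p > 0 \<and> (\<forall>n. w (n + int p) = w n) \<and>
     (\<forall>q. 0 < q \<and> q < p \<longrightarrow> \<not> (\<forall>n. w (n + int q) = w n))"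

definition orbit_set :: "(int \<Rightarrow> 'a) \<Rightarrow> (int \<Rightarrow> 'a) set" where
  "orbit_set w = {(\<lambda>n. w (n + k)) | k. True}"

definition prod_map :: "((int \<Rightarrow> 'a) \<times> (int \<Rightarrow> 'b)) \<Rightarrow> ((int \<Rightarrow> 'a) \<times> (int \<Rightarrow> 'b))" where
  "prod_map z = (shift (fst z), shift (snd z))"

definition conjugate_prod :: "(int \<Rightarrow> 'a) set \<Rightarrow> (int \<Rightarrow> 'b) set \<Rightarrow> (int \<Rightarrow> nat) set \<Rightarrow> bool" where
  "conjugate_prod X X' Y \<longleftrightarrow> (\<exists>h.
     homeomorphic_map (prod_topology (subtopology shift_top X) (subtopology shift_top X'))
                      (subtopology shift_top Y) h \<and>
     (\<forall>z \<in> X \<times> X'. h (prod_map z) = shift (h z)))"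

end

theory Submission
  imports Defs "HOL-Probability.Probability_Mass_Function"
begin

lemma topspace_shift_top[simp]: "topspace (shift_top :: (int \<Rightarrow> 'a) topology) = UNIV"
  by (simp add: shift_top_def)

lemma proj_cont: "continuous_map shift_top (discrete_topology UNIV) (\<lambda>x. x k)"
  unfolding shift_top_def by (rule continuous_map_product_projection) simp

lemma cont_into_shift_top:
  "continuous_map T shift_top f \<longleftrightarrow> (\<forall>k. continuous_map T (discrete_topology UNIV) (\<lambda>x. f x k))"
  unfolding shift_top_def by (rule continuous_map_componentwise_UNIV)

lemma shift_cont: "continuous_map shift_top shift_top shift"
  unfolding cont_into_shift_top shift_def using proj_cont by blast

definition unshift :: "(int \<Rightarrow> 'a) \<Rightarrow> (int \<Rightarrow> 'a)" where
  "unshift x = (\<lambda>n. x (n - 1))"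

lemma unshift_cont: "continuous_map shift_top shift_top unshift"
  unfolding cont_into_shift_top unshift_def using proj_cont by blast

lemma shift_unshift[simp]: "shift (unshift x) = x" "unshift (shift x) = x"
  by (auto simp: shift_def unshift_def)

lemma shift_homeo: "homeomorphic_map shift_top shift_top shift"
  by (rule homeomorphic_maps_imp_map[of _ _ _ unshift])
     (auto simp: homeomorphic_maps_def shift_cont unshift_cont)

lemma inj_shift: "inj shift"
  by (metis injI shift_unshift(2))

lemma shift_pow: "(shift ^^ n) x = (\<lambda>k. x (k + int n))"
  by (induction n arbitrary: x) (auto simp: shift_def algebra_simps)

lemma shift_pow_cont: "continuous_map shift_top shift_top (shift ^^ n)"
proof (induction n)
  case (Suc n)
  then show ?case using continuous_map_compose[OF Suc shift_cont] by (simp add: comp_def)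
qed (simp add: continuous_map_id[unfolded id_def])

lemma shift_pow_homeo: "homeomorphic_map shift_top shift_top (shift ^^ n)"
proof (induction n)
  case 0 then show ?case using homeomorphic_map_id[of shift_top shift_top] by (simp add: id_def)
next
  case (Suc n)
  then show ?case using homeomorphic_map_compose[OF Suc shift_homeo] by (simp add: comp_def)
qed

lemma closed_shift_pow_image: "closedin shift_top Z \<Longrightarrow> closedin shift_top ((shift ^^ n) ` Z)"
  using homeomorphic_map_closedness_eq[OF shift_pow_homeo] by auto

lemma closed_shift_image: "closedin shift_top Z \<Longrightarrow> closedin shift_top (shift ` Z)"
  using closed_shift_pow_image[of Z 1] by simp

lemma closed_unshift_image: "closedin shift_top Z \<Longrightarrow> closedin shift_top (unshift ` Z)"
proof -
  assume "closedin shift_top Z"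
  moreover have "unshift ` Z = shift -` Z" by (force simp: image_def)
  ultimately show ?thesis using closedin_continuous_map_preimage[OF shift_cont] by (simp add: vimage_def)
qed

lemma inj_shift_pow: "inj (shift ^^ n)"
  by (simp add: inj_fn inj_shift)

lemma shift_top_compact: "compact_space (shift_top :: (int \<Rightarrow> 'a::finite) topology)"
  unfolding shift_top_def compact_space_product_topology
  by (simp add: compact_space_discrete_topology)

lemma shift_top_Hausdorff: "Hausdorff_space shift_top"
  unfolding shift_top_def
  by (simp add: Hausdorff_space_product_topology Hausdorff_space_discrete_topology)

lemma shift_pow_image_eq: "shift ` X = X \<Longrightarrow> (shift ^^ n) ` X = X"
proof (induction n)
  case (Suc n)
  have "(shift^^Suc n) ` X = shift ` (shift^^n) ` X" by (simp add: image_image)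
  then show ?case using Suc by simp
qed simp

lemma shift_pow_unshift: "(shift ^^ n) (unshift x) = unshift ((shift ^^ n) x)"
  by (simp add: shift_pow unshift_def algebra_simps)

lemma closedin_sub: "closedin T A \<Longrightarrow> A \<subseteq> S \<Longrightarrow> closedin (subtopology T S) A"
  unfolding closedin_subtopology by (intro exI[of _ A]) auto

definition Pmin :: "nat \<Rightarrow> (int \<Rightarrow> 'a) set \<Rightarrow> bool" where
  "Pmin p X \<longleftrightarrow> (\<forall>W. W \<subseteq> X \<and> W \<noteq> {} \<and> closedin shift_top W \<and> (shift ^^ p) ` W \<subseteq> W \<longrightarrow> W = X)"

lemma minimal_shift_closed:
  assumes "subshift_on A X" "minimal_system shift_top X shift"
    and "Z \<subseteq> X" "Z \<noteq> {}" "closedin shift_top Z" "shift ` Z \<subseteq> Z"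
  shows "Z = X"
  using assms unfolding minimal_system_def subshift_on_def
  by (meson closedin_closed_subtopology)

lemma component_shift:
  assumes sub: "subshift_on A X" and Z: "Sp_minimal_component p X Z"
  shows "Sp_minimal_component p X (shift ` Z)"
  unfolding Sp_minimal_component_def
proof (intro conjI allI impI)
  show "shift ` Z \<subseteq> X" using Z sub by (auto simp: Sp_minimal_component_def subshift_on_def)
  show "shift ` Z \<noteq> {}" using Z by (auto simp: Sp_minimal_component_def)
  show "closedin shift_top (shift ` Z)" using Z closed_shift_image by (auto simp: Sp_minimal_component_def)
  have "(shift^^p) ` shift ` Z = shift ` (shift^^p) ` Z" by (simp add: image_comp comp_def funpow_swap1)
  also have "\<dots> \<subseteq> shift ` Z" using Z by (auto simp: Sp_minimal_component_def)
  finally show "(shift^^p) ` shift ` Z \<subseteq> shift ` Z" .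
  fix W assume W: "W \<subseteq> shift ` Z \<and> W \<noteq> {} \<and> closedin shift_top W \<and> (shift ^^ p) ` W \<subseteq> W"
  have m: "\<And>V. V \<subseteq> Z \<Longrightarrow> V \<noteq> {} \<Longrightarrow> closedin shift_top V \<Longrightarrow> (shift ^^ p) ` V \<subseteq> V \<Longrightarrow> V = Z"
    using Z unfolding Sp_minimal_component_def by blast
  have "unshift ` W = Z"
  proof (rule m)
    show "unshift ` W \<subseteq> Z" using W by force
    show "unshift ` W \<noteq> {}" using W by simp
    show "closedin shift_top (unshift ` W)" using W closed_unshift_image by blast
    have "(shift ^^ p) ` unshift ` W = unshift ` (shift ^^ p) ` W"
      by (simp add: image_comp comp_def shift_pow_unshift)
    also have "\<dots> \<subseteq> unshift ` W" using W by auto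
    finally show "(shift ^^ p) ` unshift ` W \<subseteq> unshift ` W" .
  qed
  then have "shift ` unshift ` W = shift ` Z" by simp
  then show "W = shift ` Z" by (simp add: image_comp comp_def)
qed

lemma component_shift_pow:
  assumes sub: "subshift_on A X" and Z: "Sp_minimal_component p X Z"
  shows "Sp_minimal_component p X ((shift ^^ i) ` Z)"
proof (induction i)
  case 0 then show ?case using Z by simp
next
  case (Suc i)
  then show ?case using component_shift[OF sub Suc] by (simp add: image_comp)
qed

lemma component_meet:
  assumes A: "Sp_minimal_component p X A" and B: "Sp_minimal_component p X B"
    and "A \<inter> B \<noteq> {}"
  shows "A = B"
proof -
  have c: "A \<inter> B \<subseteq> X \<and> A \<inter> B \<noteq> {} \<and> closedin shift_top (A \<inter> B) \<and> (shift ^^ p) ` (A \<inter> B) \<subseteq> A \<inter> B"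
    using A B assms(3) by (auto simp: Sp_minimal_component_def)
  from A have mA: "\<forall>W. W \<subseteq> A \<and> W \<noteq> {} \<and> closedin shift_top W \<and> (shift ^^ p) ` W \<subseteq> W \<longrightarrow> W = A"
    by (simp add: Sp_minimal_component_def)
  from B have mB: "\<forall>W. W \<subseteq> B \<and> W \<noteq> {} \<and> closedin shift_top W \<and> (shift ^^ p) ` W \<subseteq> W \<longrightarrow> W = B"
    by (simp add: Sp_minimal_component_def)
  have "A \<inter> B = A" using mA[rule_format, of "A \<inter> B"] c by simp
  moreover have "A \<inter> B = B" using mB[rule_format, of "A \<inter> B"] c by simp
  ultimately show ?thesis by simp
qed

lemma num_one_iff:
  assumes sub: "subshift_on A X" and min: "minimal_system shift_top X shift"
  shows "num_Sp_components p X = 1 \<longleftrightarrow> Pmin p X"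
proof
  assume P: "Pmin p X"
  have XX: "(shift^^p) ` X = X" using sub by (simp add: subshift_on_def shift_pow_image_eq)
  have "{Z. Sp_minimal_component p X Z} = {X}"
  proof (intro set_eqI iffI)
    fix Z assume "Z \<in> {Z. Sp_minimal_component p X Z}"
    then show "Z \<in> {X}" using P by (auto simp: Sp_minimal_component_def Pmin_def)
  next
    fix Z assume "Z \<in> {X}"
    then show "Z \<in> {Z. Sp_minimal_component p X Z}" using P sub XX
      by (auto simp: Sp_minimal_component_def Pmin_def subshift_on_def)
  qed
  then show "num_Sp_components p X = 1" by (simp add: num_Sp_components_def)
next
  assume "num_Sp_components p X = 1"
  then obtain Z where Zs: "{Z. Sp_minimal_component p X Z} = {Z}"
    unfolding num_Sp_components_def by (meson card_1_singletonE)
  then have Z: "Sp_minimal_component p X Z" by auto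
  have "Sp_minimal_component p X (shift ` Z)" by (rule component_shift[OF sub Z])
  then have "shift ` Z \<in> {Z. Sp_minimal_component p X Z}" by simp
  then have "shift ` Z \<in> {Z}" unfolding Zs .
  then have "shift ` Z = Z" by simp
  then have "Z = X" using minimal_shift_closed[OF sub min] Z
    by (simp add: Sp_minimal_component_def)
  then show "Pmin p X" using Z unfolding Pmin_def Sp_minimal_component_def by blast
qed

lemma eigen_pow:
  fixes f :: "(int \<Rightarrow> 'a) \<Rightarrow> complex"
  assumes "shift ` X = X" "\<forall>x\<in>X. f (shift x) = z * f x" "x \<in> X"
  shows "f ((shift^^n) x) = z^n * f x"
proof (induction n)
  case (Suc n)
  have "(shift^^n) x \<in> X" using shift_pow_image_eq[OF assms(1), of n] assms(3) by blast
  then have "f ((shift^^Suc n) x) = z * f ((shift^^n) x)" using assms(2) by simp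
  also have "\<dots> = z * (z^n * f x)" using Suc by simp
  also have "\<dots> = z^Suc n * f x" by (simp add: mult.assoc)
  finally show ?case .
qed simp

lemma Pmin_no_eigen:
  assumes sub: "subshift_on A X" and P: "Pmin p X"
  and ev: "topological_eigenvalue X z" and zp: "z^p = 1"
  shows "z = 1"
proof -
  obtain f x0 where fc: "continuous_map (subtopology shift_top X) euclidean f" and x0: "x0 \<in> X" "f x0 \<noteq> 0"
    and fe: "\<forall>x\<in>X. f (shift x) = z * f x"
    using ev unfolding topological_eigenvalue_def by blast
  have SX: "shift ` X = X" and cX: "closedin shift_top X" using sub by (auto simp: subshift_on_def)
  define W where "W = {x \<in> topspace (subtopology shift_top X). f x \<in> {f x0}}"
  have "closedin (subtopology shift_top X) W"
    unfolding W_def by (rule closedin_continuous_map_preimage[OF fc]) simp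
  then have cW: "closedin shift_top W" using closedin_trans_full cX by blast
  have W1: "W \<subseteq> X" "W \<noteq> {}" using x0 by (auto simp: W_def)
  have W2: "(shift ^^ p) ` W \<subseteq> W"
  proof
    fix y assume "y \<in> (shift ^^ p) ` W"
    then obtain x where x: "x \<in> W" "y = (shift ^^ p) x" by auto
    have "y \<in> X" using x shift_pow_image_eq[OF SX, of p] by (auto simp: W_def)
    moreover have "f y = f x" using x eigen_pow[OF SX fe, of x p] zp by (simp add: W_def)
    ultimately show "y \<in> W" using x by (simp add: W_def)
  qed
  have "W = X" using P W1 W2 cW unfolding Pmin_def by blast
  then have "shift x0 \<in> W" using x0 SX by blast
  then have "z * f x0 = f x0" using fe x0 by (simp add: W_def)
  then show "z = 1" using x0 by simp
qed

lemma exists_component: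
  fixes X :: "(int \<Rightarrow> 'a::finite) set"
  assumes sub: "subshift_on A X" and np: "\<not> Pmin p X"
  shows "\<exists>Z. Sp_minimal_component p X Z \<and> Z \<noteq> X"
proof -
  define D where "D = {W. W \<subseteq> X \<and> W \<noteq> {} \<and> closedin shift_top W \<and> (shift ^^ p) ` W \<subseteq> W}"
  define P where "P = (\<lambda>a b::(int \<Rightarrow> 'a) set. b \<subseteq> a)"
  have po: "partial_order_on D (relation_of P D)"
    by (rule partial_order_on_relation_ofI) (auto simp: P_def)
  have "\<exists>m\<in>D. \<forall>a\<in>D. P m a \<longrightarrow> a = m"
  proof (rule predicate_Zorn[OF po])
    fix C assume C: "C \<in> Chains (relation_of P D)"
    have CD: "C \<subseteq> D" using Chains_relation_of[OF C] .
    have comp: "\<forall>a\<in>C. \<forall>b\<in>C. a \<subseteq> b \<or> b \<subseteq> a" using C by (auto simp: Chains_def relation_of_def P_def)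
    show "\<exists>u\<in>D. \<forall>a\<in>C. P a u"
    proof (cases "C = {}")
      case True
      have "X \<in> D" using sub shift_pow_image_eq[of X p] by (auto simp: D_def subshift_on_def)
      then show ?thesis using True by blast
    next
      case False
      have cl: "\<forall>c\<in>C. closedin shift_top c" using CD by (auto simp: D_def)
      have fin: "\<forall>F. finite F \<and> F \<subseteq> C \<longrightarrow> \<Inter>F \<noteq> {}"
      proof (intro allI impI)
        fix F assume F: "finite F \<and> F \<subseteq> C"
        show "\<Inter>F \<noteq> {}"
        proof (cases "F = {}")
          case True then show ?thesis by simp
        next
          case False
          have "subset.chain UNIV F" using F comp by (auto simp: subset_chain_def)
          then have "\<Inter>F \<in> F" using Inter_in_chain F False by blast
          then show ?thesis using F CD by (auto simp: D_def)
        qed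
      qed
      have "\<Inter>C \<noteq> {}" using shift_top_compact[where 'a='a, unfolded compact_space_fip] cl fin by blast
      moreover have "\<Inter>C \<subseteq> X" using False CD by (auto simp: D_def)
      moreover have "closedin shift_top (\<Inter>C)" using False cl by (intro closedin_Inter) auto
      moreover have "(shift ^^ p) ` \<Inter>C \<subseteq> \<Inter>C"
      proof
        fix y assume "y \<in> (shift^^p) ` \<Inter>C"
        then obtain x where x: "x \<in> \<Inter>C" "y = (shift^^p) x" by auto
        show "y \<in> \<Inter>C"
        proof
          fix c assume "c \<in> C"
          then have "(shift^^p) ` c \<subseteq> c" "x \<in> c" using CD x by (auto simp: D_def)
          then show "y \<in> c" using x by auto
        qed
      qed
      ultimately have "\<Inter>C \<in> D" by (simp add: D_def)
      then show ?thesis by (auto simp: P_def)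
    qed
  qed
  then obtain m where m: "m \<in> D" "\<forall>a\<in>D. a \<subseteq> m \<longrightarrow> a = m" by (auto simp: P_def)
  then have "Sp_minimal_component p X m" by (auto simp: D_def Sp_minimal_component_def)
  moreover have "m \<noteq> X" using m np by (auto simp: Pmin_def D_def)
  ultimately show ?thesis by blast
qed

lemma nonPmin_eigen:
  fixes X :: "(int \<Rightarrow> 'a::finite) set"
  assumes sub: "subshift_on A X" and min: "minimal_system shift_top X shift"
    and np: "\<not> Pmin p X" and p: "p > 0"
  shows "\<exists>k::int. topological_eigenvalue X (cis (2 * pi * real_of_int k / real p)) \<and>
           cis (2 * pi * real_of_int k / real p) \<noteq> 1"
proof -
  obtain Z where Z: "Sp_minimal_component p X Z" "Z \<noteq> X" using exists_component[OF sub np] by blast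
  have SX: "shift ` X = X" and cX: "closedin shift_top X" using sub by (auto simp: subshift_on_def)
  have Zsub: "Z \<subseteq> X" "Z \<noteq> {}" "closedin shift_top Z" "(shift^^p) ` Z \<subseteq> Z"
    using Z(1) by (auto simp: Sp_minimal_component_def)
  have Zmin: "\<And>V. V \<subseteq> Z \<Longrightarrow> V \<noteq> {} \<Longrightarrow> closedin shift_top V \<Longrightarrow> (shift ^^ p) ` V \<subseteq> V \<Longrightarrow> V = Z"
    using Z(1) unfolding Sp_minimal_component_def by blast
  have Zp: "(shift^^p) ` Z = Z"
  proof (rule Zmin)
    show "(shift^^p) ` Z \<subseteq> Z" by (rule Zsub(4))
    show "(shift^^p) ` Z \<noteq> {}" using Zsub by simp
    show "closedin shift_top ((shift^^p) ` Z)" using closed_shift_pow_image Zsub by blast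
    show "(shift^^p) ` (shift^^p) ` Z \<subseteq> (shift^^p) ` Z" using Zsub(4) by (rule image_mono)
  qed
  define Zi where "Zi = (\<lambda>i. (shift^^i) ` Z)"
  have Zi0: "Zi 0 = Z" by (simp add: Zi_def)
  have Zcomp: "\<And>i. Sp_minimal_component p X (Zi i)" unfolding Zi_def by (rule component_shift_pow[OF sub Z(1)])
  define d where "d = (LEAST d. d > 0 \<and> Zi d = Z)"
  have d: "d > 0" "Zi d = Z" using LeastI[of "\<lambda>d. d > 0 \<and> Zi d = Z" p] p Zp unfolding d_def Zi_def by auto
  have dle: "\<And>e. 0 < e \<Longrightarrow> e < d \<Longrightarrow> Zi e \<noteq> Z" using not_less_Least d_def by blast
  have Zi_add: "\<And>i j. Zi (i + j) = (shift^^i) ` Zi j" by (simp add: Zi_def funpow_add image_comp)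
  have Zi_mult: "Zi (d * q) = Z" for q
  proof (induction q)
    case 0 then show ?case by (simp add: Zi_def)
  next
    case (Suc q)
    have "Zi (d * Suc q) = Zi (d + d * q)" by simp
    also have "\<dots> = (shift^^d) ` Zi (d*q)" by (rule Zi_add)
    also have "\<dots> = Z" using Suc d(2) by (simp add: Zi_def)
    finally show ?case .
  qed
  have dvd: "d dvd p"
  proof (rule ccontr)
    assume nd: "\<not> d dvd p"
    then have pm: "0 < p mod d" "p mod d < d" using d(1) by (auto simp: dvd_eq_mod_eq_0)
    have "Zi p = Zi (p mod d + d * (p div d))" by simp
    also have "\<dots> = (shift^^(p mod d)) ` Zi (d * (p div d))" by (rule Zi_add)
    also have "\<dots> = Zi (p mod d)" using Zi_mult by (simp add: Zi_def)
    finally have "Zi (p mod d) = Z" using Zp by (simp add: Zi_def)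
    then show False using dle pm by blast
  qed
  have d1: "d \<noteq> 1"
  proof
    assume "d = 1"
    then have "shift ` Z \<subseteq> Z" using d(2) by (simp add: Zi_def)
    then have "Z = X" using minimal_shift_closed[OF sub min Zsub(1,2,3)] by simp
    then show False using Z(2) by simp
  qed
  have key: "False" if ij: "i < j" "j < d" "Zi i \<inter> Zi j \<noteq> {}" for i j
  proof -
    have "Zi i = Zi j" by (rule component_meet[OF Zcomp Zcomp ij(3)])
    also have "Zi j = (shift^^i) ` Zi (j - i)" using Zi_add[of i "j-i"] ij by simp
    finally have "(shift^^i) ` Z = (shift^^i) ` Zi (j - i)" by (simp add: Zi_def)
    then have "Z = Zi (j - i)" using inj_image_eq_iff[OF inj_shift_pow[of i]] by blast
    moreover have "0 < j - i" "j - i < d" using ij by auto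
    ultimately show False using dle by metis
  qed
  have disj: "i = j" if "i < d" "j < d" "x \<in> Zi i" "x \<in> Zi j" for i j x
  proof (rule ccontr)
    assume "i \<noteq> j"
    then consider "i < j" | "j < i" by linarith
    then show False using key that by (metis disjoint_iff inf_commute)
  qed
  have ZiX: "\<And>i. Zi i \<subseteq> X" and Zicl: "\<And>i. closedin shift_top (Zi i)" and Zine: "\<And>i. Zi i \<noteq> {}"
    using Zcomp by (auto simp: Sp_minimal_component_def)
  have shift_Zi: "\<And>i. shift ` Zi i = Zi (Suc i)" by (simp add: Zi_def image_comp)
  define U where "U = (\<Union>i<d. Zi i)"
  have UX: "U = X"
  proof (rule minimal_shift_closed[OF sub min])
    show "U \<subseteq> X" using ZiX by (auto simp: U_def)
    show "U \<noteq> {}" using Zine d(1) by (auto simp: U_def)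
    show "closedin shift_top U" unfolding U_def using Zicl by (intro closedin_Union) auto
    show "shift ` U \<subseteq> U"
    proof
      fix y assume "y \<in> shift ` U"
      then obtain i x where i: "i < d" "x \<in> Zi i" "y = shift x" by (auto simp: U_def)
      then have y: "y \<in> Zi (Suc i)" using shift_Zi by blast
      show "y \<in> U"
      proof (cases "Suc i = d")
        case True
        then have "y \<in> Zi 0" using y d(2) Zi0 by simp
        then show ?thesis using d(1) by (auto simp: U_def)
      next
        case False then show ?thesis using y i by (auto simp: U_def)
      qed
    qed
  qed
  have ex_i: "\<And>x. x \<in> X \<Longrightarrow> \<exists>i<d. x \<in> Zi i" using UX by (auto simp: U_def)
  define c where "c = (\<lambda>i::nat. cis (2 * pi * real i / real d))"
  define ix where "ix = (\<lambda>x. THE i. i < d \<and> x \<in> Zi i)"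
  have ix: "ix x = i" if "i < d" "x \<in> Zi i" for x i
    unfolding ix_def by (rule the_equality) (use that disj in blast)+
  define f where "f = (\<lambda>x. c (ix x))"
  have fZ: "f x = c i" if "i < d" "x \<in> Zi i" for x i using ix that by (simp add: f_def)
  have Ziopen: "openin (subtopology shift_top X) (Zi i)" if i: "i < d" for i
  proof -
    have eq: "Zi i = X - (\<Union>j\<in>{..<d}-{i}. Zi j)"
    proof
      show "Zi i \<subseteq> X - (\<Union>j\<in>{..<d}-{i}. Zi j)" using ZiX disj i by blast
      show "X - (\<Union>j\<in>{..<d}-{i}. Zi j) \<subseteq> Zi i" using ex_i by blast
    qed
    have "closedin (subtopology shift_top X) (\<Union>j\<in>{..<d}-{i}. Zi j)"
      using Zicl ZiX by (intro closedin_sub closedin_Union) auto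
    then have "openin (subtopology shift_top X) (topspace (subtopology shift_top X) - (\<Union>j\<in>{..<d}-{i}. Zi j))"
      by (rule openin_diff[OF openin_topspace])
    then show ?thesis using eq by simp
  qed
  have fc: "continuous_map (subtopology shift_top X) euclidean f"
    unfolding continuous_map_def
  proof (intro conjI allI impI)
    show "f \<in> topspace (subtopology shift_top X) \<rightarrow> topspace euclidean" by simp
    fix V :: "complex set" assume "openin euclidean V"
    have eq: "{x \<in> topspace (subtopology shift_top X). f x \<in> V} = (\<Union>i\<in>{i. i < d \<and> c i \<in> V}. Zi i)"
    proof
      show "{x \<in> topspace (subtopology shift_top X). f x \<in> V} \<subseteq> (\<Union>i\<in>{i. i < d \<and> c i \<in> V}. Zi i)"
        using ex_i fZ by fastforce
      show "(\<Union>i\<in>{i. i < d \<and> c i \<in> V}. Zi i) \<subseteq> {x \<in> topspace (subtopology shift_top X). f x \<in> V}"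
        using ZiX fZ by auto
    qed
    show "openin (subtopology shift_top X) {x \<in> topspace (subtopology shift_top X). f x \<in> V}"
      unfolding eq using Ziopen by (intro openin_Union) auto
  qed
  define lam where "lam = cis (2 * pi / real d)"
  have fe: "\<forall>x\<in>X. f (shift x) = lam * f x"
  proof
    fix x assume "x \<in> X"
    then obtain i where i: "i < d" "x \<in> Zi i" using ex_i by blast
    have sx: "shift x \<in> Zi (Suc i)" using i shift_Zi by blast
    have lc: "lam * c i = cis (2 * pi * real (Suc i) / real d)"
    proof -
      have "2 * pi / real d + 2 * pi * real i / real d = 2 * pi * real (Suc i) / real d"
        by (simp add: algebra_simps add_divide_distrib)
      then show ?thesis by (simp add: lam_def c_def cis_mult)
    qed
    show "f (shift x) = lam * f x"
    proof (cases "Suc i = d")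
      case True
      have "shift x \<in> Zi 0" using sx True d(2) Zi0 by simp
      then have "f (shift x) = c 0" using fZ d(1) by blast
      moreover have "lam * f x = c 0"
        using fZ[OF i] lc True d(1) by (simp add: c_def)
      ultimately show ?thesis by simp
    next
      case False
      then have "f (shift x) = c (Suc i)" using fZ sx i by simp
      also have "\<dots> = lam * c i" using lc by (simp add: c_def)
      finally show ?thesis using fZ i by simp
    qed
  qed
  obtain z0 where z0: "z0 \<in> Z" using Zsub by blast
  have fz0: "f z0 = 1" using fZ[of 0 z0] d(1) Zi0 z0 by (simp add: c_def)
  have z0X: "z0 \<in> X" using z0 Zsub by blast
  have ev: "topological_eigenvalue X lam"
  proof -
    have "\<exists>x\<in>X. f x \<noteq> 0" using fz0 z0X by (intro bexI[of _ z0]) simp_all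
    then show ?thesis unfolding topological_eigenvalue_def using fc fe by blast
  qed
  have ne1: "lam \<noteq> 1"
  proof
    assume "lam = 1"
    then have "Re lam = 1" by simp
    then have "cos (2 * pi / real d) = 1" by (simp add: lam_def)
    then obtain n :: int where n: "2 * pi / real d = real_of_int n * 2 * pi" using cos_one_2pi_int by blast
    then have "real_of_int n * real d = 1" using d(1) by (simp add: field_simps)
    then have "real_of_int (n * int d) = 1" by simp
    then have "n * int d = 1" by linarith
    then have "int d dvd 1" by (metis dvd_triv_right)
    then have "d dvd 1" by (metis of_nat_1 int_dvd_int_iff)
    then show False using d1 by simp
  qed
  obtain q where q: "p = d * q" using dvd by blast
  have "q > 0" using q p by (cases q) auto
  have "cis (2 * pi * real_of_int (int q) / real p) = lam"
    using q \<open>q > 0\<close> d(1) by (simp add: lam_def field_simps)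
  then show ?thesis using ev ne1 by metis
qed

lemma c_iff_d:
  fixes X :: "(int \<Rightarrow> 'a::finite) set"
  assumes sub: "subshift_on A X" and min: "minimal_system shift_top X shift" and p: "p > 0"
  shows "num_Sp_components p X = 1 \<longleftrightarrow> (\<forall>k::int. topological_eigenvalue X (cis (2 * pi * real_of_int k / real p))
                         \<longrightarrow> cis (2 * pi * real_of_int k / real p) = 1)"
proof
  assume "num_Sp_components p X = 1"
  then have P: "Pmin p X" using num_one_iff[OF sub min] by simp
  show "\<forall>k::int. topological_eigenvalue X (cis (2 * pi * real_of_int k / real p))
                         \<longrightarrow> cis (2 * pi * real_of_int k / real p) = 1"
  proof (intro allI impI)
    fix k::int assume ev: "topological_eigenvalue X (cis (2 * pi * real_of_int k / real p))"
    have e: "real p * (2 * pi * real_of_int k / real p) = 2 * pi * real_of_int k" using p by simp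
    have "(cis (2 * pi * real_of_int k / real p)) ^ p = cis (2 * pi * real_of_int k)"
      by (simp only: Complex.DeMoivre e)
    also have "\<dots> = 1" by simp
    finally show "cis (2 * pi * real_of_int k / real p) = 1" by (rule Pmin_no_eigen[OF sub P ev])
  qed
next
  assume H: "\<forall>k::int. topological_eigenvalue X (cis (2 * pi * real_of_int k / real p))
                         \<longrightarrow> cis (2 * pi * real_of_int k / real p) = 1"
  show "num_Sp_components p X = 1"
  proof (rule ccontr)
    assume "num_Sp_components p X \<noteq> 1"
    then have "\<not> Pmin p X" using num_one_iff[OF sub min] by simp
    then show False using nonPmin_eigen[OF sub min _ p] H by blast
  qed
qed

lemma per_nat:
  assumes "\<forall>n. w (n + int p) = w n"
  shows "w (m + int p * int q) = w m"
proof (induction q arbitrary: m)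
  case (Suc q)
  have "w (m + int p * int (Suc q)) = w ((m + int p * int q) + int p)" by (simp add: algebra_simps)
  also have "\<dots> = w (m + int p * int q)" using assms by blast
  finally show ?case using Suc by simp
qed simp

lemma per_int:
  assumes "\<forall>n. w (n + int p) = w n"
  shows "w (m + int p * q) = w m"
proof (cases "q \<ge> 0")
  case True
  then show ?thesis using per_nat[OF assms, of m "nat q"] by simp
next
  case False
  have "w ((m + int p * q) + int p * int (nat (- q))) = w (m + int p * q)" by (rule per_nat[OF assms])
  then show ?thesis using False by (simp add: algebra_simps)
qed

lemma lp_pos: "least_period p w \<Longrightarrow> p > 0" by (simp add: least_period_def)

lemma shift_pow_period: "least_period p w \<Longrightarrow> (shift^^p) w = w"
  by (auto simp: least_period_def shift_pow)

lemma shift_pow_mod: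
  assumes "least_period p w"
  shows "(shift^^n) w = (shift^^(n mod p)) w"
proof -
  have per: "\<forall>n. w (n + int p) = w n" using assms by (simp add: least_period_def)
  have "w (k + int n) = w (k + int (n mod p))" for k
  proof -
    have "int n = int (n mod p) + int p * int (n div p)"
      by (metis mod_mult_div_eq of_nat_add of_nat_mult add.commute)
    then have "k + int n = (k + int (n mod p)) + int p * int (n div p)" by simp
    then show ?thesis using per_nat[OF per] by metis
  qed
  then show ?thesis by (simp add: shift_pow)
qed

lemma orbit_eq:
  assumes lp: "least_period p w"
  shows "orbit_set w = (\<lambda>j. (shift^^j) w) ` {..<p}"
proof
  have per: "\<forall>n. w (n + int p) = w n" and p: "p > 0" using lp by (auto simp: least_period_def)
  show "orbit_set w \<subseteq> (\<lambda>j. (shift^^j) w) ` {..<p}"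
  proof
    fix o' assume "o' \<in> orbit_set w"
    then obtain k where k: "o' = (\<lambda>n. w (n + k))" by (auto simp: orbit_set_def)
    define j where "j = nat (k mod int p)"
    have j: "j < p" "int j = k mod int p" using p by (auto simp: j_def nat_less_iff)
    have "w (n + k) = w (n + int j)" for n
    proof -
      have "n + k = (n + int j) + int p * (k div int p)" using j(2) by (simp add: algebra_simps)
      then show ?thesis using per_int[OF per] by metis
    qed
    then have "o' = (shift^^j) w" using k by (simp add: shift_pow)
    then show "o' \<in> (\<lambda>j. (shift^^j) w) ` {..<p}" using j by auto
  qed
  show "(\<lambda>j. (shift^^j) w) ` {..<p} \<subseteq> orbit_set w"
    by (auto simp: orbit_set_def shift_pow)
qed

lemma orbit_mem: "least_period p w \<Longrightarrow> (shift^^j) w \<in> orbit_set w"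
  by (auto simp: orbit_set_def shift_pow)

lemma orbit_inj:
  assumes lp: "least_period p w" and ij: "i < p" "j < p" and eq: "(shift^^i) w = (shift^^j) w"
  shows "i = j"
proof -
  have key: False if "a < b" "b < p" "(shift^^a) w = (shift^^b) w" for a b
  proof -
    have wb: "w (n + int b) = w (n + int a)" for n using that(3) by (metis shift_pow)
    have h: "\<forall>m. w (m + int (b - a)) = w m"
    proof
      fix m
      have eq: "(m - int a) + int b = m + int (b - a)" using \<open>a < b\<close> by simp
      show "w (m + int (b - a)) = w m" using wb[of "m - int a"] unfolding eq by simp
    qed
    moreover have "0 < b - a" "b - a < p" using that by auto
    ultimately show False using lp unfolding least_period_def by blast
  qed
  show ?thesis
  proof (rule ccontr)
    assume "i \<noteq> j"
    then consider "i < j" | "j < i" by linarith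
    then show False using key ij eq by metis
  qed
qed

lemma prod_map_pow: "(prod_map^^n) (a, b) = ((shift^^n) a, (shift^^n) b)"
  by (induction n) (auto simp: prod_map_def funpow_swap1)

lemma orbit_shift:
  assumes lp: "least_period p w"
  shows "shift ` orbit_set w = orbit_set w"
proof
  show "shift ` orbit_set w \<subseteq> orbit_set w"
  proof
    fix y assume "y \<in> shift ` orbit_set w"
    then obtain j where "y = shift ((shift^^j) w)" using orbit_eq[OF lp] by auto
    then have "y = (shift^^Suc j) w" by simp
    then show "y \<in> orbit_set w" using orbit_mem[OF lp] by blast
  qed
  show "orbit_set w \<subseteq> shift ` orbit_set w"
  proof
    fix o' assume "o' \<in> orbit_set w"
    then obtain j where j: "o' = (shift^^j) w" using orbit_eq[OF lp] by auto
    have p: "p > 0" using lp by (simp add: least_period_def)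
    have "(shift^^(j + p)) w = (shift^^j) w"
      by (simp add: funpow_add shift_pow_period[OF lp])
    then have "o' = shift ((shift^^(j + p - 1)) w)" using j p
      by (metis Suc_diff_1 add_gr_0 funpow.simps(2) comp_apply)
    then show "o' \<in> shift ` orbit_set w" using orbit_mem[OF lp] by blast
  qed
qed

lemma topspace_PT:
  "topspace (prod_topology (subtopology shift_top X) (subtopology shift_top Orb)) = X \<times> Orb"
  by simp

lemma prod_minimal_iff:
  fixes X :: "(int \<Rightarrow> 'a) set" and w :: "int \<Rightarrow> 'b"
  assumes sub: "subshift_on A X" and lp: "least_period p w"
  shows "minimal_system (prod_topology (subtopology shift_top X) (subtopology shift_top (orbit_set w)))
           (X \<times> orbit_set w) prod_map \<longleftrightarrow> Pmin p X"
proof -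
  define Orb where "Orb = orbit_set w"
  define PT where "PT = prod_topology (subtopology shift_top X) (subtopology shift_top Orb)"
  have tPT: "topspace PT = X \<times> Orb" by (simp add: PT_def)
  have sPT: "subtopology PT (X \<times> Orb) = PT" using tPT subtopology_topspace by metis
  have SX: "shift ` X = X" and cX: "closedin shift_top X" and Xne: "X \<noteq> {}"
    using sub by (auto simp: subshift_on_def)
  have p: "p > 0" using lp by (simp add: least_period_def)
  have Oeq: "Orb = (\<lambda>j. (shift^^j) w) ` {..<p}" unfolding Orb_def by (rule orbit_eq[OF lp])
  have wO: "(shift^^j) w \<in> Orb" for j unfolding Orb_def by (rule orbit_mem[OF lp])
  have per: "(shift^^p) w = w" by (rule shift_pow_period[OF lp])
  have SO: "shift ` Orb = Orb" unfolding Orb_def by (rule orbit_shift[OF lp])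
  have SXj: "(shift^^j) ` X = X" for j by (rule shift_pow_image_eq[OF SX])
  show ?thesis
    unfolding Orb_def[symmetric] PT_def[symmetric]
  proof
    assume M: "minimal_system PT (X \<times> Orb) prod_map"
    have Mmin: "\<And>C. closedin PT C \<Longrightarrow> C \<noteq> {} \<Longrightarrow> prod_map ` C \<subseteq> C \<Longrightarrow> C = X \<times> Orb"
      using M sPT unfolding minimal_system_def by metis
    show "Pmin p X"
      unfolding Pmin_def
    proof (intro allI impI, elim conjE)
      fix Z assume Z: "Z \<subseteq> X" "Z \<noteq> {}" "closedin shift_top Z" "(shift ^^ p) ` Z \<subseteq> Z"
      define C where "C = (\<Union>j<p. (shift^^j) ` Z \<times> {(shift^^j) w})"
      have "closedin PT C"
        unfolding C_def
      proof (intro closedin_Union, simp, clarify)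
        fix j assume "j < p"
        have "closedin (subtopology shift_top X) ((shift^^j) ` Z)"
          using closed_shift_pow_image[OF Z(3)] Z(1) SXj[of j] by (intro closedin_sub) auto
        moreover have "closedin (subtopology shift_top Orb) {(shift^^j) w}"
          using wO[of j] by (intro closedin_sub closedin_Hausdorff_singleton shift_top_Hausdorff) auto
        ultimately show "closedin PT ((shift^^j) ` Z \<times> {(shift^^j) w})"
          by (simp add: PT_def closedin_prod_Times_iff)
      qed
      moreover have "C \<noteq> {}" using Z(2) p by (auto simp: C_def)
      moreover have "prod_map ` C \<subseteq> C"
      proof
        fix y assume "y \<in> prod_map ` C"
        then obtain j x where j: "j < p" "x \<in> (shift^^j) ` Z" "y = prod_map (x, (shift^^j) w)"
          by (auto simp: C_def)
        have y: "y = (shift x, (shift^^Suc j) w)" using j by (simp add: prod_map_def)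
        have sx: "shift x \<in> (shift^^Suc j) ` Z" using j(2) by (auto simp: image_iff)
        show "y \<in> C"
        proof (cases "Suc j = p")
          case True
          then have "shift x \<in> Z" "(shift^^Suc j) w = w" using sx Z(4) per by auto
          then show ?thesis using y p unfolding C_def by (auto intro!: bexI[of _ 0])
        next
          case False
          then show ?thesis using y sx j unfolding C_def by (auto intro!: bexI[of _ "Suc j"])
        qed
      qed
      ultimately have CX: "C = X \<times> Orb" using Mmin by blast
      show "Z = X"
      proof
        show "X \<subseteq> Z"
        proof
          fix x assume "x \<in> X"
          then have "(x, w) \<in> C" using CX wO[of 0] by simp
          then obtain j where j: "j < p" "x \<in> (shift^^j) ` Z" "w = (shift^^j) w" by (auto simp: C_def)
          have "j = 0" using orbit_inj[OF lp p j(1)] j(3) by simp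
          then show "x \<in> Z" using j by simp
        qed
      qed (rule Z(1))
    qed
  next
    assume P: "Pmin p X"
    show "minimal_system PT (X \<times> Orb) prod_map"
      unfolding minimal_system_def sPT
    proof (intro conjI allI impI)
      show "X \<times> Orb \<noteq> {}" using Xne wO by blast
      show "prod_map ` (X \<times> Orb) \<subseteq> X \<times> Orb" using SX SO by (auto simp: prod_map_def)
      fix C assume "closedin PT C \<and> C \<noteq> {} \<and> prod_map ` C \<subseteq> C"
      then have C: "closedin PT C" "C \<noteq> {}" "prod_map ` C \<subseteq> C" by auto
      have CXO: "C \<subseteq> X \<times> Orb" using closedin_subset[OF C(1)] tPT by simp
      have Cn: "(prod_map^^n) ` C \<subseteq> C" for n
      proof (induction n)
        case (Suc n)
        have "(prod_map^^Suc n) ` C = prod_map ` (prod_map^^n) ` C" by (simp add: image_image)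
        also have "\<dots> \<subseteq> prod_map ` C" using Suc by (rule image_mono)
        finally show ?case using C(3) by blast
      qed simp
      have Cn': "(prod_map^^n) z \<in> C" if "z \<in> C" for n z using Cn that by blast
      define C0 where "C0 = {x \<in> topspace (subtopology shift_top X). (\<lambda>x. (x, w)) x \<in> C}"
      have cm: "continuous_map (subtopology shift_top X) PT (\<lambda>x. (x, w))"
        unfolding PT_def using wO[of 0]
        by (intro continuous_map_pairedI) (auto simp: continuous_map_id[unfolded id_def])
      have "closedin (subtopology shift_top X) C0"
        unfolding C0_def by (rule closedin_continuous_map_preimage[OF cm C(1)])
      then have cC0: "closedin shift_top C0" using closedin_trans_full cX by blast
      have C0ne: "C0 \<noteq> {}"
      proof -
        obtain x1 o1 where xo: "(x1, o1) \<in> C" using C(2) by auto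
        then obtain j where j: "j < p" "o1 = (shift^^j) w" using CXO Oeq by auto
        have "(prod_map^^(p - j)) (x1, o1) \<in> C" by (rule Cn'[OF xo])
        moreover have "(shift^^(p - j)) o1 = w"
          using j per by (simp add: funpow_add[symmetric, THEN fun_cong, simplified comp_def])
        moreover have "(shift^^(p-j)) x1 \<in> X" using xo CXO SXj by auto
        ultimately show ?thesis unfolding C0_def by (auto simp: prod_map_pow)
      qed
      have "C0 = X"
      proof -
        have "C0 \<subseteq> X" by (auto simp: C0_def)
        moreover have "(shift^^p) ` C0 \<subseteq> C0"
        proof
          fix y assume "y \<in> (shift^^p) ` C0"
          then obtain x where x: "x \<in> C0" "y = (shift^^p) x" by auto
          have "(prod_map^^p) (x, w) \<in> C" using x Cn' by (auto simp: C0_def)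
          then have "(y, w) \<in> C" using x per by (simp add: prod_map_pow)
          moreover have "y \<in> X" using x SXj by (auto simp: C0_def)
          ultimately show "y \<in> C0" by (simp add: C0_def)
        qed
        ultimately show ?thesis using P cC0 C0ne unfolding Pmin_def by blast
      qed
      show "C = X \<times> Orb"
      proof
        show "X \<times> Orb \<subseteq> C"
        proof clarify
          fix x o' assume xo: "x \<in> X" "o' \<in> Orb"
          then obtain j where j: "o' = (shift^^j) w" using Oeq by auto
          obtain x' where x': "x' \<in> X" "x = (shift^^j) x'" using xo(1) SXj[of j] by force
          have "(x', w) \<in> C" using x' \<open>C0 = X\<close> by (auto simp: C0_def)
          then have "(prod_map^^j) (x', w) \<in> C" by (rule Cn')
          then show "(x, o') \<in> C" using x' j by (simp add: prod_map_pow)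
        qed
      qed (rule CXO)
    qed
  qed
qed

definition opS :: "(int \<Rightarrow> 'a) set \<Rightarrow> (int \<Rightarrow> 'a) set set" where
  "opS S = {U. openin (subtopology shift_top S) U}"

lemma opS_Pow: "opS S \<subseteq> Pow S"
  unfolding opS_def using openin_subset by fastforce

lemma cont_meas:
  assumes "continuous_map (subtopology shift_top S) (subtopology shift_top T) f"
  shows "f \<in> measurable (sigma S (opS S)) (sigma T (opS T))"
proof (rule measurable_measure_of)
  show "opS T \<subseteq> Pow T" by (rule opS_Pow)
  show "f \<in> space (sigma S (opS S)) \<rightarrow> T" using assms by (auto simp: continuous_map_def space_measure_of_conv)
  fix U assume "U \<in> opS T"
  then have "openin (subtopology shift_top S) {x \<in> topspace (subtopology shift_top S). f x \<in> U}"
    by (intro openin_continuous_map_preimage[OF assms]) (simp add: opS_def)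
  moreover have eq: "f -` U \<inter> S = {x \<in> topspace (subtopology shift_top S). f x \<in> U}" by auto
  ultimately have "f -` U \<inter> S \<in> sigma_sets S (opS S)" by (intro sigma_sets.Basic) (simp add: opS_def)
  then show "f -` U \<inter> space (sigma S (opS S)) \<in> sets (sigma S (opS S))"
    by (simp add: sets_measure_of[OF opS_Pow] space_measure_of_conv)
qed

lemma cyl_base_open: "openin shift_top {x. \<forall>i<length u. x (int i) = u ! i}"
proof (cases "u = []")
  case True then show ?thesis using openin_topspace[of shift_top] by simp
next
  case False
  have eq: "{x. \<forall>i<length u. x (int i) = u ! i} =
      \<Inter>((\<lambda>i. {x \<in> topspace shift_top. x (int i) \<in> {u ! i}}) ` {..<length u})" by auto
  have o: "\<And>i. openin shift_top {x \<in> topspace shift_top. x (int i) \<in> {u ! i}}"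
    by (rule openin_continuous_map_preimage[OF proj_cont]) simp
  show ?thesis unfolding eq
  proof (rule openin_Inter)
    show "finite ((\<lambda>i. {x \<in> topspace shift_top. x (int i) \<in> {u ! i}}) ` {..<length u})" by simp
    have "0 < length u" using False by simp
    then have "{x \<in> topspace shift_top. x (int 0) \<in> {u ! 0}} \<in> (\<lambda>i. {x \<in> topspace shift_top. x (int i) \<in> {u ! i}}) ` {..<length u}"
      by (intro imageI) simp
    then show "(\<lambda>i. {x \<in> topspace shift_top. x (int i) \<in> {u ! i}}) ` {..<length u} \<noteq> {}" by blast
    fix V assume "V \<in> (\<lambda>i. {x \<in> topspace shift_top. x (int i) \<in> {u ! i}}) ` {..<length u}"
    then obtain i where "V = {x \<in> topspace shift_top. x (int i) \<in> {u ! i}}" by blast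
    then show "openin shift_top V" using o by simp
  qed
qed

lemma cyl_open: "openin (subtopology shift_top S) (cylinder S u)"
proof -
  have "cylinder S u = {x. \<forall>i<length u. x (int i) = u ! i} \<inter> S" by (auto simp: cylinder_def)
  then show ?thesis using cyl_base_open unfolding openin_subtopology by blast
qed

lemma sum_shift_cyclic:
  fixes f :: "nat \<Rightarrow> 'c::comm_monoid_add"
  assumes "p > 0" "f p = f 0"
  shows "(\<Sum>j<p. f (Suc j)) = (\<Sum>j<p. f j)"
proof -
  obtain q where q: "p = Suc q" using assms(1) by (cases p) auto
  have "(\<Sum>j<p. f (Suc j)) = (\<Sum>j<q. f (Suc j)) + f p" by (simp add: q)
  also have "\<dots> = f 0 + (\<Sum>j<q. f (Suc j))" using assms(2) by (simp add: add.commute)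
  also have "\<dots> = (\<Sum>j<p. f j)" unfolding q by (rule sum.lessThan_Suc_shift[symmetric])
  finally show ?thesis .
qed

lemma finite_language: "finite (language (X :: (int \<Rightarrow> 'a::finite) set) n)"
proof -
  have "language X n \<subseteq> {xs. set xs \<subseteq> UNIV \<and> length xs = n}" by (auto simp: language_def)
  then show ?thesis using finite_lists_length_eq[of "UNIV :: 'a set" n] finite_subset by auto
qed

lemma finite_language_B:
  assumes "finite B" "\<forall>y\<in>Y. range y \<subseteq> B"
  shows "finite (language Y n)"
proof -
  have "language Y n \<subseteq> {xs. set xs \<subseteq> B \<and> length xs = n}"
  proof
    fix c assume "c \<in> language Y n"
    then obtain y where y: "y \<in> Y" "\<forall>i<length c. y (int i) = c ! i" "length c = n"
      by (auto simp: language_def cylinder_def)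
    have "set c \<subseteq> B"
    proof
      fix b assume "b \<in> set c"
      then obtain i where "i < length c" "c ! i = b" by (auto simp: in_set_conv_nth)
      then have "y (int i) = b" using y by simp
      then show "b \<in> B" using y(1) assms(2) by (metis rangeI subsetD)
    qed
    then show "c \<in> {xs. set xs \<subseteq> B \<and> length xs = n}" using y by simp
  qed
  then show ?thesis using finite_lists_length_eq[OF assms(1)] finite_subset by blast
qed

lemma language_ne:
  assumes "Y \<noteq> {}" shows "language Y n \<noteq> {}"
proof -
  obtain y where "y \<in> Y" using assms by blast
  then have "map (\<lambda>i. y (int i)) [0..<n] \<in> language Y n"
    by (auto simp: language_def cylinder_def intro!: exI[of _ y])
  then show ?thesis by blast
qed

lemma bosh_transfer:
  fixes X :: "(int \<Rightarrow> 'a::finite) set" and w :: "int \<Rightarrow> 'b" and Y :: "(int \<Rightarrow> nat) set"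
    and code :: "'a \<Rightarrow> 'b \<Rightarrow> nat" and h :: "(int \<Rightarrow> 'a) \<times> (int \<Rightarrow> 'b) \<Rightarrow> (int \<Rightarrow> nat)"
  assumes sub: "subshift_on A X" and lp: "least_period p w" and bos: "boshernitzan X"
    and hdef: "h = (\<lambda>z n. code (fst z n) (snd z n))"
    and hY: "Y = h ` (X \<times> orbit_set w)"
    and hc: "continuous_map (prod_topology (subtopology shift_top X) (subtopology shift_top (orbit_set w))) shift_top h"
    and finB: "finite B" and YB: "\<forall>y\<in>Y. range y \<subseteq> B"
  shows "boshernitzan Y"
proof -
  obtain \<nu> where inv: "shift_invariant_prob X \<nu>" and
    lim: "limsup (\<lambda>n. ereal (real n * Min ((\<lambda>u. measure \<nu> (cylinder X u)) ` language X n))) > 0"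
    using bos unfolding boshernitzan_def by blast
  have prob\<nu>: "prob_space \<nu>" and sp\<nu>: "space \<nu> = X" and sets\<nu>: "sets \<nu> = sigma_sets X (opS X)"
    and inv\<nu>: "\<And>B. B \<in> sets \<nu> \<Longrightarrow> emeasure \<nu> (shift -` B \<inter> X) = emeasure \<nu> B"
    using inv unfolding shift_invariant_prob_def opS_def by auto
  define Orb where "Orb = orbit_set w"
  have p: "p > 0" using lp by (simp add: least_period_def)
  have Oeq: "Orb = (\<lambda>j. (shift^^j) w) ` {..<p}" unfolding Orb_def by (rule orbit_eq[OF lp])
  have wO: "(shift^^j) w \<in> Orb" for j unfolding Orb_def by (rule orbit_mem[OF lp])
  have per: "(shift^^p) w = w" by (rule shift_pow_period[OF lp])
  have SX: "shift ` X = X" and Xne: "X \<noteq> {}" using sub by (auto simp: subshift_on_def)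
  have Yne: "Y \<noteq> {}"
  proof -
    obtain x0 where "x0 \<in> X" using Xne by blast
    then have "(x0, (shift^^0) w) \<in> X \<times> orbit_set w" using wO[of 0] by (simp add: Orb_def)
    then show ?thesis unfolding hY by blast
  qed
  define g where "g = (\<lambda>j x. h (x, (shift^^j) w))"
  have gY: "g j x \<in> Y" if "x \<in> X" for j x using that wO by (auto simp: g_def hY Orb_def)
  have gc: "continuous_map (subtopology shift_top X) (subtopology shift_top Y) (g j)" for j
  proof -
    have "continuous_map (subtopology shift_top X)
            (prod_topology (subtopology shift_top X) (subtopology shift_top (orbit_set w))) (\<lambda>x. (x, (shift^^j) w))"
      using wO[of j] unfolding Orb_def
      by (intro continuous_map_pairedI) (auto simp: continuous_map_id[unfolded id_def])
    then have "continuous_map (subtopology shift_top X) shift_top (g j)"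
      using continuous_map_compose[OF _ hc] by (simp add: g_def comp_def)
    then show ?thesis using gY by (auto simp: continuous_map_in_subtopology)
  qed
  define MY where "MY = sigma Y (opS Y)"
  have setsMY: "sets MY = sigma_sets Y (opS Y)" by (simp add: MY_def sets_measure_of[OF opS_Pow])
  have spMY: "space MY = Y" by (simp add: MY_def space_measure_of_conv)
  have gm: "g j \<in> measurable \<nu> MY" for j
  proof -
    have "g j \<in> measurable (sigma X (opS X)) MY" unfolding MY_def by (rule cont_meas[OF gc])
    moreover have "measurable (sigma X (opS X)) MY = measurable \<nu> MY"
      by (rule measurable_cong_sets) (simp_all add: sets\<nu> sets_measure_of[OF opS_Pow])
    ultimately show ?thesis by simp
  qed
  define N where "N = (\<lambda>j. distr \<nu> MY (g j))"
  have Nprob: "prob_space (N j)" for j unfolding N_def by (rule prob_space.prob_space_distr[OF prob\<nu> gm])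
  have setsN: "sets (N j) = sets MY" for j by (simp add: N_def)
  define P where "P = measure_pmf (pmf_of_set {..<p})"
  define \<mu> where "\<mu> = P \<bind> N"
  have Nmeas: "N \<in> measurable P (subprob_algebra MY)"
    by (simp add: P_def space_subprob_algebra Nprob prob_space_imp_subprob_space setsN)
  have setsmu: "sets \<mu> = sets MY" unfolding \<mu>_def by (rule sets_bind) (simp_all add: setsN P_def)
  have spmu: "space \<mu> = Y" using sets_eq_imp_space_eq[OF setsmu] spMY by simp
  have probmu: "prob_space \<mu>" unfolding \<mu>_def P_def
    by (rule measure_pmf.prob_space_bind[OF _ Nmeas[unfolded P_def]]) (simp add: Nprob)
  have pne: "{..<p} \<noteq> {}" using p by auto
  have fin\<nu>: "finite_measure \<nu>" using prob\<nu> by (simp add: prob_space_def)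
  have finmu: "finite_measure \<mu>" using probmu by (simp add: prob_space_def)
  have emN: "emeasure (N j) B = emeasure \<nu> (g j -` B \<inter> X)" if "B \<in> sets MY" for j B
    unfolding N_def using emeasure_distr[OF gm that] sp\<nu> by simp
  have emmu: "emeasure \<mu> B = (\<Sum>j<p. emeasure (N j) B) / of_nat p" if B: "B \<in> sets MY" for B
  proof -
    have "emeasure \<mu> B = (\<integral>\<^sup>+j. emeasure (N j) B \<partial>P)"
      unfolding \<mu>_def by (rule emeasure_bind[OF _ Nmeas B]) (simp add: P_def)
    also have "\<dots> = (\<Sum>j<p. emeasure (N j) B) / of_nat p"
      unfolding P_def using nn_integral_pmf_of_set[OF pne finite_lessThan] by simp
    finally show ?thesis .
  qed
  have PM: "prod_map ` (X \<times> Orb) \<subseteq> X \<times> Orb"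
    using SX orbit_shift[OF lp] by (auto simp: prod_map_def Orb_def)
  have hshift: "h (prod_map z) = shift (h z)" for z by (simp add: hdef prod_map_def shift_def)
  have SY: "shift ` Y \<subseteq> Y"
  proof
    fix y assume "y \<in> shift ` Y"
    then obtain z where z: "z \<in> X \<times> Orb" "y = shift (h z)" by (auto simp: hY Orb_def)
    then have "y = h (prod_map z)" by (simp add: hshift)
    then show "y \<in> Y" using PM z by (auto simp: hY Orb_def)
  qed
  have shm: "shift \<in> measurable MY MY"
  proof -
    have "continuous_map (subtopology shift_top Y) (subtopology shift_top Y) shift"
      using SY by (auto simp: continuous_map_in_subtopology continuous_map_from_subtopology[OF shift_cont])
    then show ?thesis unfolding MY_def by (rule cont_meas)
  qed
  have gshift: "shift (g j x) = g (Suc j) (shift x)" for j x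
    by (simp add: g_def hdef shift_def)
  have invmu: "emeasure \<mu> (shift -` B \<inter> Y) = emeasure \<mu> B" if B: "B \<in> sets MY" for B
  proof -
    have B': "shift -` B \<inter> Y \<in> sets MY" using measurable_sets[OF shm B] spMY by simp
    have step: "emeasure (N j) (shift -` B \<inter> Y) = emeasure (N (Suc j)) B" for j
    proof -
      have gB: "g (Suc j) -` B \<inter> X \<in> sets \<nu>" using measurable_sets[OF gm B] sp\<nu> by simp
      have "g j -` (shift -` B \<inter> Y) \<inter> X = shift -` (g (Suc j) -` B \<inter> X) \<inter> X"
        using gY SX gshift by auto
      then have "emeasure (N j) (shift -` B \<inter> Y) = emeasure \<nu> (shift -` (g (Suc j) -` B \<inter> X) \<inter> X)"
        using emN[OF B'] by simp
      also have "\<dots> = emeasure \<nu> (g (Suc j) -` B \<inter> X)" by (rule inv\<nu>[OF gB])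
      also have "\<dots> = emeasure (N (Suc j)) B" using emN[OF B] by simp
      finally show ?thesis .
    qed
    have gp: "g p = g 0" by (simp add: g_def per)
    have "(\<Sum>j<p. emeasure (N j) (shift -` B \<inter> Y)) = (\<Sum>j<p. emeasure (N (Suc j)) B)"
      using step by simp
    also have "\<dots> = (\<Sum>j<p. emeasure (N j) B)"
      by (rule sum_shift_cyclic[OF p]) (simp add: N_def gp)
    finally show ?thesis using emmu[OF B] emmu[OF B'] by simp
  qed
  define mX where "mX = (\<lambda>n. Min ((\<lambda>u. measure \<nu> (cylinder X u)) ` language X n))"
  define mY where "mY = (\<lambda>n. Min ((\<lambda>c. measure \<mu> (cylinder Y c)) ` language Y n))"
  have cylY: "cylinder Y c \<in> sets MY" for c
    using cyl_open[of Y c] by (simp add: setsMY opS_def sigma_sets.Basic)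
  have cylX: "cylinder X u \<in> sets \<nu>" for u
    using cyl_open[of X u] by (simp add: sets\<nu> opS_def sigma_sets.Basic)
  have cylbound: "mX n / real p \<le> measure \<mu> (cylinder Y c)" if c: "c \<in> language Y n" for n c
  proof -
    obtain y where y: "y \<in> cylinder Y c" using c by (auto simp: language_def)
    then obtain x o' where xo: "x \<in> X" "o' \<in> Orb" "y = h (x, o')" by (auto simp: cylinder_def hY Orb_def)
    then obtain j where j: "j < p" "o' = (shift^^j) w" using Oeq by auto
    have ygj: "y = g j x" using xo j by (simp add: g_def)
    define u where "u = map (\<lambda>i. x (int i)) [0..<n]"
    have lc: "length c = n" using c by (simp add: language_def)
    have xu: "x \<in> cylinder X u" using xo by (simp add: cylinder_def u_def)
    then have uL: "u \<in> language X n" by (auto simp: language_def u_def)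
    have sub1: "cylinder X u \<subseteq> g j -` cylinder Y c \<inter> X"
    proof
      fix x' assume x': "x' \<in> cylinder X u"
      then have x'X: "x' \<in> X" and agree: "\<forall>i<n. x' (int i) = x (int i)" by (auto simp: cylinder_def u_def)
      have "\<forall>i<length c. g j x' (int i) = c ! i"
      proof (intro allI impI)
        fix i assume "i < length c"
        then have "g j x' (int i) = g j x (int i)" using agree lc by (simp add: g_def hdef)
        also have "\<dots> = c ! i" using y ygj \<open>i < length c\<close> by (simp add: cylinder_def)
        finally show "g j x' (int i) = c ! i" .
      qed
      then show "x' \<in> g j -` cylinder Y c \<inter> X" using gY[OF x'X] x'X by (simp add: cylinder_def)
    qed
    have gcs: "g j -` cylinder Y c \<inter> X \<in> sets \<nu>" using measurable_sets[OF gm cylY] sp\<nu> by simp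
    have "emeasure \<nu> (cylinder X u) \<le> emeasure \<nu> (g j -` cylinder Y c \<inter> X)"
      by (rule emeasure_mono[OF sub1 gcs])
    also have "\<dots> = emeasure (N j) (cylinder Y c)" using emN[OF cylY] by simp
    also have "\<dots> \<le> (\<Sum>i<p. emeasure (N i) (cylinder Y c))"
      by (rule member_le_sum) (use j in auto)
    finally have "emeasure \<nu> (cylinder X u) / of_nat p \<le> (\<Sum>i<p. emeasure (N i) (cylinder Y c)) / of_nat p"
      by (rule divide_right_mono_ennreal)
    also have "\<dots> = emeasure \<mu> (cylinder Y c)" using emmu[OF cylY] by simp
    finally have le: "emeasure \<nu> (cylinder X u) / of_nat p \<le> emeasure \<mu> (cylinder Y c)" .
    have "ennreal (measure \<nu> (cylinder X u) / real p) = emeasure \<nu> (cylinder X u) / of_nat p"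
      using p by (simp add: finite_measure.emeasure_eq_measure[OF fin\<nu>] divide_ennreal ennreal_of_nat_eq_real_of_nat)
    also have "\<dots> \<le> ennreal (measure \<mu> (cylinder Y c))"
      using le by (simp add: finite_measure.emeasure_eq_measure[OF finmu])
    finally have "measure \<nu> (cylinder X u) / real p \<le> measure \<mu> (cylinder Y c)" by simp
    moreover have "mX n \<le> measure \<nu> (cylinder X u)"
      unfolding mX_def using uL finite_language[of X n] by simp
    ultimately show ?thesis using p by (smt (verit) divide_right_mono of_nat_0_le_iff)
  qed
  have mle: "mX n / real p \<le> mY n" for n
    unfolding mY_def using cylbound finite_language_B[OF finB YB, of n] language_ne[OF Yne, of n]
    by simp
  have "limsup (\<lambda>n. ereal (real n * mX n)) * ereal (1 / real p) = limsup (\<lambda>n. ereal (real n * mX n) * ereal (1 / real p))"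
    by (rule Limsup_ereal_mult_right[symmetric]) simp_all
  also have "\<dots> \<le> limsup (\<lambda>n. ereal (real n * mY n))"
  proof (rule Limsup_mono[OF always_eventually], rule allI)
    fix n
    have "real n * mX n * (1 / real p) \<le> real n * mY n"
      using mult_left_mono[OF mle[of n], of "real n"] by simp
    then show "ereal (real n * mX n) * ereal (1 / real p) \<le> ereal (real n * mY n)" by simp
  qed
  finally have limY: "limsup (\<lambda>n. ereal (real n * mX n)) * ereal (1 / real p) \<le> limsup (\<lambda>n. ereal (real n * mY n))" .
  have "0 < limsup (\<lambda>n. ereal (real n * mX n)) * ereal (1 / real p)"
    using lim p unfolding mX_def by (simp add: ereal_zero_less_0_iff)
  then have posY: "0 < limsup (\<lambda>n. ereal (real n * mY n))" using limY by simp
  have "shift_invariant_prob Y \<mu>"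
    unfolding shift_invariant_prob_def
    using probmu spmu setsmu setsMY invmu by (simp add: opS_def)
  then show ?thesis unfolding boshernitzan_def using posY unfolding mY_def by blast
qed

lemma a_to_b:
  fixes X :: "(int \<Rightarrow> 'a) set" and w :: "int \<Rightarrow> 'b" and Y :: "(int \<Rightarrow> nat) set"
  assumes sub: "subshift_on A0 X" and lp: "least_period p w"
    and minY: "minimal_system shift_top Y shift" and cj: "conjugate_prod X (orbit_set w) Y"
  shows "minimal_system (prod_topology (subtopology shift_top X) (subtopology shift_top (orbit_set w)))
           (X \<times> orbit_set w) prod_map"
proof -
  define Orb where "Orb = orbit_set w"
  define PT where "PT = prod_topology (subtopology shift_top X) (subtopology shift_top Orb)"
  obtain h where hh: "homeomorphic_map PT (subtopology shift_top Y) h"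
    and hs: "\<forall>z \<in> X \<times> Orb. h (prod_map z) = shift (h z)"
    using cj unfolding conjugate_prod_def PT_def Orb_def by blast
  have tPT: "topspace PT = X \<times> Orb" by (simp add: PT_def)
  have sPT: "subtopology PT (X \<times> Orb) = PT" using tPT subtopology_topspace by metis
  have SX: "shift ` X = X" and Xne: "X \<noteq> {}" using sub by (auto simp: subshift_on_def)
  have wO: "(shift^^j) w \<in> Orb" for j unfolding Orb_def by (rule orbit_mem[OF lp])
  have SO: "shift ` Orb = Orb" unfolding Orb_def by (rule orbit_shift[OF lp])
  have hsurj: "h ` (X \<times> Orb) = Y" using homeomorphic_imp_surjective_map[OF hh] tPT by simp
  have hinj: "inj_on h (X \<times> Orb)" using homeomorphic_imp_injective_map[OF hh] tPT by simp
  have Ymin: "\<And>Z. closedin (subtopology shift_top Y) Z \<Longrightarrow> Z \<noteq> {} \<Longrightarrow> shift ` Z \<subseteq> Z \<Longrightarrow> Z = Y"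
    using minY unfolding minimal_system_def by blast
  show ?thesis
    unfolding Orb_def[symmetric] PT_def[symmetric] minimal_system_def sPT
  proof (intro conjI allI impI)
    show "X \<times> Orb \<noteq> {}" using Xne wO by blast
    show "prod_map ` (X \<times> Orb) \<subseteq> X \<times> Orb" using SX SO by (auto simp: prod_map_def)
    fix C assume "closedin PT C \<and> C \<noteq> {} \<and> prod_map ` C \<subseteq> C"
    then have C: "closedin PT C" "C \<noteq> {}" "prod_map ` C \<subseteq> C" by auto
    have CXO: "C \<subseteq> X \<times> Orb" using closedin_subset[OF C(1)] tPT by simp
    have "closedin (subtopology shift_top Y) (h ` C)"
      using homeomorphic_map_closedness_eq[OF hh] C(1) by blast
    moreover have "h ` C \<noteq> {}" using C(2) by simp
    moreover have "shift ` h ` C \<subseteq> h ` C"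
    proof
      fix y assume "y \<in> shift ` h ` C"
      then obtain z where z: "z \<in> C" "y = shift (h z)" by auto
      then have "y = h (prod_map z)" using hs CXO by auto
      then show "y \<in> h ` C" using C(3) z by auto
    qed
    ultimately have "h ` C = Y" using Ymin by blast
    then have "h ` C = h ` (X \<times> Orb)" using hsurj by simp
    then show "C = X \<times> Orb" using inj_on_image_eq_iff[OF hinj CXO] by blast
  qed
qed

lemma b_to_a:
  fixes X :: "(int \<Rightarrow> 'a::finite) set" and w :: "int \<Rightarrow> 'b"
  assumes sub: "subshift_on UNIV X" and bos: "boshernitzan X" and lp: "least_period p w"
    and M: "minimal_system (prod_topology (subtopology shift_top X) (subtopology shift_top (orbit_set w)))
           (X \<times> orbit_set w) prod_map"
  shows "\<exists>(A::nat set) Y. finite A \<and> subshift_on A Y \<and> minimal_system shift_top Y shift \<and>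
              boshernitzan Y \<and> conjugate_prod X (orbit_set w) Y"
proof -
  define Orb where "Orb = orbit_set w"
  define PT where "PT = prod_topology (subtopology shift_top X) (subtopology shift_top Orb)"
  define code :: "'a \<Rightarrow> 'b \<Rightarrow> nat" where "code = (\<lambda>a b. prod_encode (to_nat a, to_nat_on (range w) b))"
  define h where "h = (\<lambda>(z::(int \<Rightarrow> 'a) \<times> (int \<Rightarrow> 'b)) n. code (fst z n) (snd z n))"
  define Y where "Y = h ` (X \<times> Orb)"
  define A where "A = (\<lambda>(a, b). code a b) ` (UNIV \<times> range w)"
  have tPT: "topspace PT = X \<times> Orb" by (simp add: PT_def)
  have sPT: "subtopology PT (X \<times> Orb) = PT" using tPT subtopology_topspace by metis
  have SX: "shift ` X = X" and Xne: "X \<noteq> {}" and cX: "closedin shift_top X"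
    using sub by (auto simp: subshift_on_def)
  have p: "p > 0" using lp by (simp add: least_period_def)
  have Oeq: "Orb = (\<lambda>j. (shift^^j) w) ` {..<p}" unfolding Orb_def by (rule orbit_eq[OF lp])
  have wO: "(shift^^j) w \<in> Orb" for j unfolding Orb_def by (rule orbit_mem[OF lp])
  have SO: "shift ` Orb = Orb" unfolding Orb_def by (rule orbit_shift[OF lp])
  have finO: "finite Orb" by (simp add: Oeq)
  have rangeO: "o' n \<in> range w" if "o' \<in> Orb" for o' n
    using that by (auto simp: Oeq shift_pow)
  have finrw: "finite (range w)"
  proof -
    have "range w \<subseteq> (\<lambda>o'. o' 0) ` Orb"
    proof
      fix b assume "b \<in> range w"
      then obtain n where n: "b = w n" by auto
      have "(\<lambda>k. w (k + n)) \<in> Orb" by (auto simp: Orb_def orbit_set_def)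
      then show "b \<in> (\<lambda>o'. o' 0) ` Orb" using n by (intro image_eqI[of _ _ "\<lambda>k. w (k + n)"]) simp_all
    qed
    then show ?thesis using finO finite_subset by blast
  qed
  have injw: "inj_on (to_nat_on (range w)) (range w)"
    by (rule inj_on_to_nat_on[OF countable_finite[OF finrw]])
  have codeinj: "a = a' \<and> b = b'" if "code a b = code a' b'" "b \<in> range w" "b' \<in> range w" for a a' b b'
  proof -
    have "to_nat a = to_nat a'" "to_nat_on (range w) b = to_nat_on (range w) b'"
      using that(1) by (auto simp: code_def)
    then show ?thesis using injw that(2,3) by (auto dest: inj_onD)
  qed
  have hinj: "inj_on h (X \<times> Orb)"
  proof (rule inj_onI)
    fix z1 z2 assume z: "z1 \<in> X \<times> Orb" "z2 \<in> X \<times> Orb" "h z1 = h z2"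
    have "fst z1 n = fst z2 n \<and> snd z1 n = snd z2 n" for n
    proof (rule codeinj)
      show "code (fst z1 n) (snd z1 n) = code (fst z2 n) (snd z2 n)"
        using fun_cong[OF z(3), of n] by (simp add: h_def)
      show "snd z1 n \<in> range w" "snd z2 n \<in> range w" using z rangeO by auto
    qed
    then show "z1 = z2" by (simp add: prod_eq_iff fun_eq_iff)
  qed
  have hshift: "h (prod_map z) = shift (h z)" for z by (simp add: h_def prod_map_def shift_def)
  have hc: "continuous_map PT shift_top h"
    unfolding cont_into_shift_top
  proof
    fix k
    have c1: "continuous_map PT (discrete_topology UNIV) (\<lambda>z. fst z k)"
      using continuous_map_compose[OF continuous_map_fst continuous_map_from_subtopology[OF proj_cont]]
      unfolding PT_def by (simp add: comp_def)
    have c2: "continuous_map PT (discrete_topology UNIV) (\<lambda>z. snd z k)"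
      using continuous_map_compose[OF continuous_map_snd continuous_map_from_subtopology[OF proj_cont]]
      unfolding PT_def by (simp add: comp_def)
    have "continuous_map PT (prod_topology (discrete_topology UNIV) (discrete_topology UNIV)) (\<lambda>z. (fst z k, snd z k))"
      using c1 c2 by (rule continuous_map_pairedI)
    then have c3: "continuous_map PT (discrete_topology UNIV) (\<lambda>z. (fst z k, snd z k))"
      by (simp add: prod_topology_discrete_topology[symmetric])
    have c4: "continuous_map (discrete_topology UNIV) (discrete_topology UNIV) (\<lambda>(a, b). code a b)" by simp
    show "continuous_map PT (discrete_topology UNIV) (\<lambda>x. h x k)"
      using continuous_map_compose[OF c3 c4] by (simp add: comp_def h_def)
  qed
  have cptX: "compact_space (subtopology shift_top X)"
    by (rule compact_space_subtopology[OF closedin_compact_space[OF shift_top_compact cX]])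
  have cptO: "compact_space (subtopology shift_top Orb)"
    by (rule compact_space_subtopology[OF finite_imp_compactin]) (simp_all add: finO)
  have cpt: "compact_space PT" unfolding PT_def compact_space_prod_topology using cptX cptO by simp
  have hY: "h \<in> topspace PT \<rightarrow> Y" using tPT by (auto simp: Y_def)
  have hc2: "continuous_map PT (subtopology shift_top Y) h"
    using hc hY by (simp add: continuous_map_in_subtopology)
  have hh: "homeomorphic_map PT (subtopology shift_top Y) h"
  proof (rule continuous_imp_homeomorphic_map[OF hc2 cpt])
    show "Hausdorff_space (subtopology shift_top Y)" by (rule Hausdorff_space_subtopology[OF shift_top_Hausdorff])
    show "h ` topspace PT = topspace (subtopology shift_top Y)" using tPT by (simp add: Y_def)
    show "inj_on h (topspace PT)" using tPT hinj by simp
  qed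
  have Ycl: "closedin shift_top Y"
  proof -
    have "compactin PT (topspace PT)" using cpt by (simp add: compact_space_def)
    then have "compactin shift_top (h ` topspace PT)" by (rule image_compactin[OF _ hc])
    then show ?thesis using tPT compactin_imp_closedin[OF shift_top_Hausdorff] by (simp add: Y_def)
  qed
  have PM: "prod_map ` (X \<times> Orb) = X \<times> Orb"
  proof
    show "prod_map ` (X \<times> Orb) \<subseteq> X \<times> Orb" using SX SO by (auto simp: prod_map_def)
    show "X \<times> Orb \<subseteq> prod_map ` (X \<times> Orb)"
    proof clarify
      fix x o' assume "x \<in> X" "o' \<in> Orb"
      then obtain x1 o1 where "x1 \<in> X" "x = shift x1" "o1 \<in> Orb" "o' = shift o1"
        using SX SO by (metis imageE)
      then show "(x, o') \<in> prod_map ` (X \<times> Orb)" by (force simp: prod_map_def)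
    qed
  qed
  have YS: "shift ` Y = Y"
  proof -
    have "shift ` Y = h ` prod_map ` (X \<times> Orb)" by (simp add: Y_def image_image hshift)
    then show ?thesis using PM by (simp add: Y_def)
  qed
  have Yne: "Y \<noteq> {}" using Xne wO by (auto simp: Y_def)
  have YA: "\<forall>y\<in>Y. range y \<subseteq> A"
    using rangeO by (auto simp: Y_def A_def h_def)
  have finA: "finite A" unfolding A_def using finrw by simp
  have subY: "subshift_on A Y" unfolding subshift_on_def using Yne Ycl YS YA by simp
  have minY: "minimal_system shift_top Y shift"
    unfolding minimal_system_def
  proof (intro conjI allI impI)
    show "Y \<noteq> {}" by (rule Yne)
    show "shift ` Y \<subseteq> Y" using YS by simp
    fix Z assume "closedin (subtopology shift_top Y) Z \<and> Z \<noteq> {} \<and> shift ` Z \<subseteq> Z"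
    then have Z: "closedin (subtopology shift_top Y) Z" "Z \<noteq> {}" "shift ` Z \<subseteq> Z" by auto
    have ZY: "Z \<subseteq> Y" using closedin_subset[OF Z(1)] by simp
    define C where "C = {z \<in> topspace PT. h z \<in> Z}"
    have "closedin PT C" unfolding C_def by (rule closedin_continuous_map_preimage[OF hc2 Z(1)])
    moreover have "C \<noteq> {}" using Z(2) ZY tPT by (auto simp: C_def Y_def)
    moreover have "prod_map ` C \<subseteq> C"
    proof
      fix y assume "y \<in> prod_map ` C"
      then obtain z where z: "z \<in> C" "y = prod_map z" by auto
      have "h y = shift (h z)" using z hshift by simp
      then have "h y \<in> Z" using z Z(3) by (auto simp: C_def)
      moreover have "y \<in> topspace PT" using z PM tPT by (auto simp: C_def)
      ultimately show "y \<in> C" by (simp add: C_def)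
    qed
    ultimately have "C = X \<times> Orb" using M sPT unfolding minimal_system_def PT_def Orb_def by metis
    then have "Y \<subseteq> Z" by (auto simp: C_def Y_def tPT)
    then show "Z = Y" using ZY by blast
  qed
  have conj: "conjugate_prod X (orbit_set w) Y"
    unfolding conjugate_prod_def using hh hshift unfolding PT_def Orb_def by blast
  have bosY: "boshernitzan Y"
  proof (rule bosh_transfer[where code=code and h=h, OF sub lp bos _ _ _ finA YA])
    show "h = (\<lambda>z n. code (fst z n) (snd z n))" by (simp add: h_def fun_eq_iff)
    show "Y = h ` (X \<times> orbit_set w)" by (simp add: Y_def Orb_def)
    show "continuous_map (prod_topology (subtopology shift_top X) (subtopology shift_top (orbit_set w))) shift_top h"
      using hc by (simp add: PT_def Orb_def)
  qed
  show ?thesis using finA subY minY bosY conj by blast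
qed

theorem theorem3p9:
  fixes X :: "(int \<Rightarrow> 'a::finite) set" and w :: "int \<Rightarrow> 'b" and p :: nat
  assumes "subshift_on UNIV X"
    and "minimal_system shift_top X shift"
    and "boshernitzan X"
    and "least_period p w"
  shows "((\<exists>(A::nat set) Y. finite A \<and> subshift_on A Y \<and> minimal_system shift_top Y shift \<and>
              boshernitzan Y \<and> conjugate_prod X (orbit_set w) Y)
          \<longleftrightarrow> minimal_system (prod_topology (subtopology shift_top X) (subtopology shift_top (orbit_set w)))
                (X \<times> orbit_set w) prod_map)
       \<and> (minimal_system (prod_topology (subtopology shift_top X) (subtopology shift_top (orbit_set w)))
                (X \<times> orbit_set w) prod_map
          \<longleftrightarrow> num_Sp_components p X = 1)
       \<and> (num_Sp_components p X = 1
          \<longleftrightarrow> (\<forall>k::int. topological_eigenvalue X (cis (2 * pi * real_of_int k / real p))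
                         \<longrightarrow> cis (2 * pi * real_of_int k / real p) = 1))"
proof -
  have p: "p > 0" using assms(4) by (simp add: least_period_def)
  have ab: "(\<exists>(A::nat set) Y. finite A \<and> subshift_on A Y \<and> minimal_system shift_top Y shift \<and>
              boshernitzan Y \<and> conjugate_prod X (orbit_set w) Y)
          \<longleftrightarrow> minimal_system (prod_topology (subtopology shift_top X) (subtopology shift_top (orbit_set w)))
                (X \<times> orbit_set w) prod_map"
    using a_to_b[OF assms(1) assms(4)] b_to_a[OF assms(1) assms(3) assms(4)] by blast
  have bc: "minimal_system (prod_topology (subtopology shift_top X) (subtopology shift_top (orbit_set w)))
                (X \<times> orbit_set w) prod_map \<longleftrightarrow> num_Sp_components p X = 1"
    using prod_minimal_iff[OF assms(1) assms(4)] num_one_iff[OF assms(1) assms(2)] by simp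
  have cd: "num_Sp_components p X = 1
          \<longleftrightarrow> (\<forall>k::int. topological_eigenvalue X (cis (2 * pi * real_of_int k / real p))
                         \<longrightarrow> cis (2 * pi * real_of_int k / real p) = 1)"
    by (rule c_iff_d[OF assms(1) assms(2) p])
  show ?thesis using ab bc cd by blast
qed

end
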